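(* For every integer $n\ge 2$, the path $P_n$ on $n$ vertices satisfies $IDI(P_n)=2$.
   Context: For a finite simple connected graph $G=(V,E)$ with diameter $d$, a rank assignment is a function $f:V\to\mathbb{R}$; under $f$, the string of a vertex $v$ is the $d$-vector whose $i$-th coordinate is the sum of $f(w)$ over all vertices $w$ with $d(v,w)=i$. The ID-index $IDI(G)$ is the minimum $k$ such that there exists $f:V\to\mathbb{R}$ with $|f(V)|=k$ under which all vertices have distinct strings. *)

theory Defs
  imports Complex_Main
begin

text \<open>A finite simple graph is given by a vertex set V and a symmetric irreflexive
adjacency relation E. Walks are vertex lists with consecutive vertices adjacent.\<close>

definition is_walk :: "'a set \<Rightarrow> ('a \<Rightarrow> 'a \<Rightarrow> bool) \<Rightarrow> 'a list \<Rightarrow> bool" where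
  "is_walk V E xs \<longleftrightarrow> xs \<noteq> [] \<and> set xs \<subseteq> V \<and>
     (\<forall>i. Suc i < length xs \<longrightarrow> E (xs ! i) (xs ! Suc i))"

definition gdist :: "'a set \<Rightarrow> ('a \<Rightarrow> 'a \<Rightarrow> bool) \<Rightarrow> 'a \<Rightarrow> 'a \<Rightarrow> nat" where
  "gdist V E v w = (LEAST k. \<exists>xs. is_walk V E xs \<and> hd xs = v \<and> last xs = w \<and> length xs = Suc k)"

definition diameter :: "'a set \<Rightarrow> ('a \<Rightarrow> 'a \<Rightarrow> bool) \<Rightarrow> nat" where
  "diameter V E = Max {gdist V E v w | v w. v \<in> V \<and> w \<in> V}"

definition vstring :: "'a set \<Rightarrow> ('a \<Rightarrow> 'a \<Rightarrow> bool) \<Rightarrow> ('a \<Rightarrow> real) \<Rightarrow> 'a \<Rightarrow> real list" where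
  "vstring V E f v = map (\<lambda>i. \<Sum>w\<in>{w\<in>V. gdist V E v w = i}. f w) [1..<Suc (diameter V E)]"

definition IDI :: "'a set \<Rightarrow> ('a \<Rightarrow> 'a \<Rightarrow> bool) \<Rightarrow> nat" where
  "IDI V E = (LEAST k. \<exists>f :: 'a \<Rightarrow> real. card (f ` V) = k \<and> inj_on (vstring V E f) V)"

definition path_V :: "nat \<Rightarrow> nat set" where
  "path_V n = {0..<n}"

definition path_E :: "nat \<Rightarrow> nat \<Rightarrow> bool" where
  "path_E i j \<longleftrightarrow> Suc i = j \<or> Suc j = i"

end

theory Submission
  imports Defs
begin

definition nd :: "nat \<Rightarrow> nat \<Rightarrow> nat" where "nd v w = (v - w) + (w - v)"

lemma nd0[simp]: "nd v 0 = v" "nd 0 v = v" by (auto simp: nd_def)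

lemma walk_step:
  assumes "is_walk V path_E xs" "i < length xs"
  shows "nd (xs ! 0) (xs ! i) \<le> i"
  using assms(2)
proof (induction i)
  case 0 then show ?case by (simp add: nd_def)
next
  case (Suc i)
  have "path_E (xs ! i) (xs ! Suc i)" using assms(1) Suc.prems by (simp add: is_walk_def)
  then show ?case using Suc by (auto simp: path_E_def nd_def)
qed

lemma walk_bound:
  assumes "is_walk V path_E xs" "hd xs = v" "last xs = w" "length xs = Suc k"
  shows "nd v w \<le> k"
proof -
  have "xs \<noteq> []" using assms(4) by auto
  hence "hd xs = xs ! 0" "last xs = xs ! k" using assms(4) by (auto simp: hd_conv_nth last_conv_nth)
  thus ?thesis using walk_step[OF assms(1), of k] assms by auto
qed

lemma walk_exists:
  assumes "v < n" "w < n"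
  shows "\<exists>xs. is_walk (path_V n) path_E xs \<and> hd xs = v \<and> last xs = w \<and> length xs = Suc (nd v w)"
proof (cases "v \<le> w")
  case True
  let ?xs = "map (\<lambda>i. v + i) [0..<Suc (w - v)]"
  have "is_walk (path_V n) path_E ?xs"
    unfolding is_walk_def path_V_def path_E_def using True assms
    by (auto simp del: upt_Suc)
  moreover have "hd ?xs = v" by (simp add: hd_map del: upt_Suc)
  moreover have "last ?xs = w" using True by (simp add: last_map del: upt_Suc)
  ultimately show ?thesis using True by (auto simp: nd_def)
next
  case False
  let ?xs = "map (\<lambda>i. v - i) [0..<Suc (v - w)]"
  have "is_walk (path_V n) path_E ?xs"
    unfolding is_walk_def path_V_def path_E_def using False assms
    by (auto simp del: upt_Suc)
  moreover have "hd ?xs = v" by (simp add: hd_map del: upt_Suc)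
  moreover have "last ?xs = w" using False by (simp add: last_map del: upt_Suc)
  ultimately show ?thesis using False by (auto simp: nd_def)
qed

lemma mem_path_V[simp]: "x \<in> path_V n \<longleftrightarrow> x < n" by (simp add: path_V_def)

lemma gdist_path:
  assumes "v < n" "w < n"
  shows "gdist (path_V n) path_E v w = nd v w"
  unfolding gdist_def
  apply (rule Least_equality)
  using walk_exists[OF assms] apply blast
  using walk_bound by blast

lemma diam_path:
  assumes "n \<ge> 1"
  shows "diameter (path_V n) path_E = n - 1"
proof -
  have "{gdist (path_V n) path_E v w | v w. v \<in> path_V n \<and> w \<in> path_V n}
        = {nd v w | v w. v < n \<and> w < n}"
  proof (intro equalityI subsetI)
    fix x assume "x \<in> {gdist (path_V n) path_E v w | v w. v \<in> path_V n \<and> w \<in> path_V n}"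
    then obtain v w where "v < n" "w < n" "x = gdist (path_V n) path_E v w" by auto
    thus "x \<in> {nd v w | v w. v < n \<and> w < n}" using gdist_path by auto
  next
    fix x assume "x \<in> {nd v w | v w. v < n \<and> w < n}"
    then obtain v w where "v < n" "w < n" "x = nd v w" by auto
    hence "x = gdist (path_V n) path_E v w" using gdist_path by auto
    thus "x \<in> {gdist (path_V n) path_E v w | v w. v \<in> path_V n \<and> w \<in> path_V n}"
      using \<open>v < n\<close> \<open>w < n\<close> by auto
  qed
  moreover have "Max {nd v w | v w. v < n \<and> w < n} = n - 1"
  proof (rule Max_eqI)
    have "{nd v w | v w. v < n \<and> w < n} \<subseteq> {..n}" by (auto simp: nd_def)
    thus "finite {nd v w | v w. v < n \<and> w < n}" by (rule finite_subset) auto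
    show "\<And>y. y \<in> {nd v w | v w. v < n \<and> w < n} \<Longrightarrow> y \<le> n - 1" by (auto simp: nd_def)
    show "n - 1 \<in> {nd v w | v w. v < n \<and> w < n}"
    proof -
      have "n - 1 = nd 0 (n - 1)" by simp
      moreover have "(0::nat) < n" "n - 1 < n" using assms by auto
      ultimately show ?thesis by blast
    qed
  qed
  ultimately show ?thesis by (simp add: diameter_def)
qed

lemma vstring_path:
  assumes "n \<ge> 1" "v < n"
  shows "vstring (path_V n) path_E f v =
     map (\<lambda>i. \<Sum>w\<in>{w. w < n \<and> nd v w = i}. f w) [1..<n]"
proof -
  have "{w \<in> path_V n. gdist (path_V n) path_E v w = i} = {w. w < n \<and> nd v w = i}" for i
    using assms by (auto simp: gdist_path)
  thus ?thesis using assms by (simp add: vstring_def diam_path)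
qed

lemma const_not_inj:
  assumes "n \<ge> 2" "\<And>w. w < n \<Longrightarrow> f w = c"
  shows "\<not> inj_on (vstring (path_V n) path_E f) (path_V n)"
proof -
  have A: "{w. w < n \<and> nd 0 w = i} = {i}" if "1 \<le> i" "i < n" for i
    using that by (auto simp: nd_def)
  have B: "{w. w < n \<and> nd (n - 1) w = i} = {n - 1 - i}" if "1 \<le> i" "i < n" for i
    using that by (auto simp: nd_def)
  have "vstring (path_V n) path_E f 0 = vstring (path_V n) path_E f (n - 1)"
  proof -
    have n0: "n \<ge> 1" "0 < n" "n - 1 < n" using assms(1) by auto
    show ?thesis unfolding vstring_path[OF n0(1) n0(2)] vstring_path[OF n0(1) n0(3)]
    proof (rule map_cong[OF refl])
      fix i assume "i \<in> set [1..<n]"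
      hence i: "1 \<le> i" "i < n" by auto
      show "(\<Sum>w\<in>{w. w < n \<and> nd 0 w = i}. f w) = (\<Sum>w\<in>{w. w < n \<and> nd (n - 1) w = i}. f w)"
        unfolding A[OF i] B[OF i] using assms(2) i by simp
    qed
  qed
  moreover have "0 \<in> path_V n" "n - 1 \<in> path_V n" "0 \<noteq> n - 1" using assms by (auto simp: path_V_def)
  ultimately show ?thesis by (metis inj_onD)
qed

lemma ind_inj:
  assumes "n \<ge> 2"
  shows "inj_on (vstring (path_V n) path_E (\<lambda>w. if w = 0 then 1 else 0)) (path_V n)"
proof (rule inj_onI)
  fix x y assume x: "x \<in> path_V n" and y: "y \<in> path_V n"
    and eq: "vstring (path_V n) path_E (\<lambda>w. if w = 0 then 1 else 0) x =
             vstring (path_V n) path_E (\<lambda>w. if w = 0 then 1 else 0) y"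
  have S: "(\<Sum>w\<in>{w. w < n \<and> nd v w = i}. (if w = 0 then 1 else 0 :: real)) = (if v = i then 1 else 0)"
    if "v < n" for v i
  proof -
    have "(\<Sum>w\<in>{w. w < n \<and> nd v w = i}. (if w = 0 then 1 else 0 :: real))
       = (if 0 \<in> {w. w < n \<and> nd v w = i} then 1 else 0)"
      by (rule sum.delta) auto
    also have "(0 \<in> {w. w < n \<and> nd v w = i}) = (v = i)"
      using that assms by (auto simp: nd_def)
    finally show ?thesis by simp
  qed
  have xs: "vstring (path_V n) path_E (\<lambda>w. if w = 0 then 1 else 0) x = map (\<lambda>i. if x = i then 1 else 0) [1..<n]"
    using x assms by (simp add: vstring_path S)
  have ys: "vstring (path_V n) path_E (\<lambda>w. if w = 0 then 1 else 0) y = map (\<lambda>i. if y = i then 1 else 0) [1..<n]"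
    using y assms by (simp add: vstring_path S)
  have E: "map (\<lambda>i. if x = i then 1 else (0::real)) [1..<n] = map (\<lambda>i. if y = i then 1 else 0) [1..<n]"
    using eq xs ys by simp
  have key: "a = b" if "a < n" "b < n" "a \<noteq> 0"
     "map (\<lambda>i. if a = i then 1 else (0::real)) [1..<n] = map (\<lambda>i. if b = i then 1 else 0) [1..<n]" for a b
  proof -
    have "map (\<lambda>i. if a = i then 1 else (0::real)) [1..<n] ! (a - 1) = 1"
      using that by simp
    moreover have "map (\<lambda>i. if b = i then 1 else (0::real)) [1..<n] ! (a - 1) = (if b = a then 1 else 0)"
      using that by simp
    ultimately show ?thesis using that(4) by (metis zero_neq_one)
  qed
  show "x = y"
  proof (cases "x = 0")
    case True
    show ?thesis
    proof (rule ccontr)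
      assume "x \<noteq> y"
      hence "y \<noteq> 0" using True by simp
      thus False using key[of y x] x y E \<open>x \<noteq> y\<close> by auto
    qed
  next
    case False
    thus ?thesis using key[of x y] x y E by auto
  qed
qed

theorem mainTheorem7:
  fixes n :: nat
  assumes "n \<ge> 2"
  shows "IDI (path_V n) path_E = 2"
  unfolding IDI_def
proof (rule Least_equality)
  define f :: "nat \<Rightarrow> real" where "f = (\<lambda>w. if w = 0 then 1 else 0)"
  have f0: "f 0 = 1" and f1: "f 1 = 0" by (simp_all add: f_def)
  have sub: "f ` path_V n \<subseteq> {0, 1}" by (auto simp: f_def)
  have m0: "1 \<in> f ` path_V n" using assms f0 by (intro rev_image_eqI[of 0]) auto
  have m1: "0 \<in> f ` path_V n" using assms f1 by (intro rev_image_eqI[of 1]) auto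
  have "f ` path_V n = {0, 1}" using sub m0 m1 by blast
  hence "card (f ` path_V n) = 2" by simp
  moreover have "inj_on (vstring (path_V n) path_E f) (path_V n)"
    unfolding f_def by (rule ind_inj[OF assms])
  ultimately show "\<exists>f :: nat \<Rightarrow> real. card (f ` path_V n) = 2 \<and> inj_on (vstring (path_V n) path_E f) (path_V n)"
    by blast
next
  fix k assume "\<exists>f :: nat \<Rightarrow> real. card (f ` path_V n) = k \<and> inj_on (vstring (path_V n) path_E f) (path_V n)"
  then obtain f :: "nat \<Rightarrow> real" where c: "card (f ` path_V n) = k"
    and i: "inj_on (vstring (path_V n) path_E f) (path_V n)" by blast
  show "2 \<le> k"
  proof (rule ccontr)
    assume k2: "\<not> 2 \<le> k"
    have fin: "finite (f ` path_V n)" by (simp add: path_V_def)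
    have ne: "f ` path_V n \<noteq> {}" using assms by (auto simp: path_V_def)
    have "k \<noteq> 0" using c fin ne card_0_eq by blast
    with k2 have "card (f ` path_V n) = 1" using c by simp
    then obtain c where cc: "f ` path_V n = {c}" by (rule card_1_singletonE)
    have "\<And>w. w < n \<Longrightarrow> f w = c"
    proof -
      fix w assume "w < n"
      hence "f w \<in> f ` path_V n" by simp
      thus "f w = c" using cc by simp
    qed
    hence "\<not> inj_on (vstring (path_V n) path_E f) (path_V n)" by (rule const_not_inj[OF assms])
    thus False using i by contradiction
  qed
qed

end
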